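(* Let $S$ be a finite $p$-group and $\mathcal{A}$ a bifree $S$-algebra. If $\mathcal{A}(S)\neq0$ and there exists an $(S,S)$-invariant $\mathcal{O}$-basis $Y$ of $\mathcal{A}$ with $Y\subseteq\mathcal{A}^\times$, then $\mathcal{A}$ is divisible.
   Context: $\mathcal{O}$ is a complete local noetherian domain with maximal ideal $\mathfrak{m}$ and algebraically closed residue field $k$ of characteristic $p$ (possibly $\mathcal{O}=k$). An interior $S$-algebra is an $\mathcal{O}$-algebra $\mathcal{A}$, free of finite rank as an $\mathcal{O}$-module, with a group homomorphism $S\to\mathcal{A}^\times$; $S\times S$ acts on $\mathcal{A}$ by $(s,t)\cdot a=sat^{-1}$. It is a bifree $S$-algebra if it has an $\mathcal{O}$-basis $Y$ with $sY=Y=Ys$ for all $s\in S$ (an $(S,S)$-invariant basis) on which the left and right $S$-actions are free. For a subgroup $U\le S\times S$ the Brauer quotient is $\mathcal{A}(U)=\mathcal{A}^U/(\mathfrak{m}\mathcal{A}^U+\sum_{V<U}\mathrm{tr}_V^U(\mathcal{A}^V))$. For $P\le S$ and injective homomorphism $\varphi:P\to S$, $\mathcal{A}(\varphi)$ denotes $\mathcal{A}(\Delta(\varphi,P))$ with $\Delta(\varphi,P)=\{(\varphi(p),p):p\in P\}$, and $\mathcal{A}(P)=\mathcal{A}(\iota_P)$ for the inclusion $\iota_P$. The fixed-point fusion presystem $\mathfrak{F}_S(\mathcal{A})$ has objects the subgroups of $S$ and $\mathrm{Hom}(P,Q)=\{\varphi:P\to Q$ injective homomorphism $:\mathcal{A}(\varphi)\neq0\}$.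 $\mathcal{A}$ is divisible if $\mathfrak{F}_S(\mathcal{A})$ contains all inclusions between subgroups of $S$, is closed under composition (so is a category), and every morphism $\varphi:P\to Q$ is an inclusion composed with a group isomorphism $P\to\varphi(P)$ that is an isomorphism in $\mathfrak{F}_S(\mathcal{A})$ (its inverse also lies in $\mathfrak{F}_S(\mathcal{A})$). *)

theory Defs
  imports "HOL-Algebra.Coset" "HOL-Computational_Algebra.Polynomial"
begin

definition is_ideal :: "'o::comm_ring_1 set \<Rightarrow> bool" where
  "is_ideal I \<longleftrightarrow> 0 \<in> I \<and> (\<forall>x\<in>I. \<forall>y\<in>I. x + y \<in> I) \<and> (\<forall>r. \<forall>x\<in>I. r * x \<in> I)"

definition maximal_ideal :: "'o::comm_ring_1 set \<Rightarrow> bool" where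
  "maximal_ideal I \<longleftrightarrow> is_ideal I \<and> I \<noteq> UNIV \<and>
     (\<forall>J. is_ideal J \<and> I \<subseteq> J \<longrightarrow> J = I \<or> J = UNIV)"

definition ideal_gen :: "'o::comm_ring_1 set \<Rightarrow> 'o set" where
  "ideal_gen X = \<Inter>{I. is_ideal I \<and> X \<subseteq> I}"

fun ideal_pow :: "'o::comm_ring_1 set \<Rightarrow> nat \<Rightarrow> 'o set" where
  "ideal_pow m 0 = UNIV"
| "ideal_pow m (Suc n) = ideal_gen {a * b | a b. a \<in> m \<and> b \<in> ideal_pow m n}"

definition local_ring_max :: "'o::comm_ring_1 set \<Rightarrow> bool" where
  "local_ring_max m \<longleftrightarrow> maximal_ideal m \<and> (\<forall>I. maximal_ideal I \<longrightarrow> I = m)"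

definition noetherian_ring :: "'o::comm_ring_1 itself \<Rightarrow> bool" where
  "noetherian_ring _ \<longleftrightarrow> (\<forall>I::'o set. is_ideal I \<longrightarrow> (\<exists>F. finite F \<and> I = ideal_gen F))"

definition adically_complete :: "'o::comm_ring_1 set \<Rightarrow> bool" where
  "adically_complete m \<longleftrightarrow>
     (\<Inter>n. ideal_pow m n) = {0} \<and>
     (\<forall>x::nat \<Rightarrow> 'o. (\<forall>n. \<exists>N. \<forall>i\<ge>N. \<forall>j\<ge>N. x i - x j \<in> ideal_pow m n) \<longrightarrow>
        (\<exists>l. \<forall>n. \<exists>N. \<forall>i\<ge>N. x i - l \<in> ideal_pow m n))"

(* the residue field O/m is algebraically closed, expressed via representatives:
   every polynomial over O whose image in k[x] has positive degree has a root in k *)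
definition residue_alg_closed :: "'o::comm_ring_1 set \<Rightarrow> bool" where
  "residue_alg_closed m \<longleftrightarrow>
     (\<forall>f::'o poly. degree f \<ge> 1 \<and> lead_coeff f \<notin> m \<longrightarrow> (\<exists>x. poly f x \<in> m))"

definition residue_char :: "'o::comm_ring_1 set \<Rightarrow> nat \<Rightarrow> bool" where
  "residue_char m p \<longleftrightarrow> prime p \<and> of_nat p \<in> m"

definition coeff_ring :: "'o::idom set \<Rightarrow> nat \<Rightarrow> bool" where
  "coeff_ring m p \<longleftrightarrow> local_ring_max m \<and> noetherian_ring TYPE('o) \<and> adically_complete m
      \<and> residue_char m p \<and> residue_alg_closed m"

definition O_basis :: "('o::comm_ring_1 \<Rightarrow> 'a::ab_group_add \<Rightarrow> 'a) \<Rightarrow> 'a set \<Rightarrow> bool" where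
  "O_basis scale Y \<longleftrightarrow> \<not> module.dependent scale Y \<and> module.span scale Y = UNIV"

definition is_unit_elem :: "'a::ring_1 \<Rightarrow> bool" where
  "is_unit_elem a \<longleftrightarrow> (\<exists>b. a * b = 1 \<and> b * a = 1)"

definition interior_algebra ::
  "('o::comm_ring_1 \<Rightarrow> 'a::ring_1 \<Rightarrow> 'a) \<Rightarrow> ('g, 'b) monoid_scheme \<Rightarrow> ('g \<Rightarrow> 'a) \<Rightarrow> bool" where
  "interior_algebra scale S \<sigma> \<longleftrightarrow>
     module scale \<and>
     (\<forall>r a b. scale r (a * b) = scale r a * b \<and> scale r (a * b) = a * scale r b) \<and>
     (\<exists>B. finite B \<and> O_basis scale B) \<and>
     (\<forall>s\<in>carrier S. \<forall>t\<in>carrier S. \<sigma> (s \<otimes>\<^bsub>S\<^esub> t) = \<sigma> s * \<sigma> t) \<and>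
     \<sigma> \<one>\<^bsub>S\<^esub> = 1 \<and>
     (\<forall>s\<in>carrier S. is_unit_elem (\<sigma> s))"

definition SS_invariant :: "('g, 'b) monoid_scheme \<Rightarrow> ('g \<Rightarrow> 'a::ring_1) \<Rightarrow> 'a set \<Rightarrow> bool" where
  "SS_invariant S \<sigma> Y \<longleftrightarrow>
     (\<forall>s\<in>carrier S. (\<lambda>y. \<sigma> s * y) ` Y = Y \<and> (\<lambda>y. y * \<sigma> s) ` Y = Y)"

definition bifree_algebra ::
  "('o::comm_ring_1 \<Rightarrow> 'a::ring_1 \<Rightarrow> 'a) \<Rightarrow> ('g, 'b) monoid_scheme \<Rightarrow> ('g \<Rightarrow> 'a) \<Rightarrow> bool" where
  "bifree_algebra scale S \<sigma> \<longleftrightarrow> interior_algebra scale S \<sigma> \<and>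
     (\<exists>Y. O_basis scale Y \<and> SS_invariant S \<sigma> Y \<and>
        (\<forall>s\<in>carrier S. \<forall>y\<in>Y. \<sigma> s * y = y \<longrightarrow> s = \<one>\<^bsub>S\<^esub>) \<and>
        (\<forall>s\<in>carrier S. \<forall>y\<in>Y. y * \<sigma> s = y \<longrightarrow> s = \<one>\<^bsub>S\<^esub>))"

definition SS_act :: "('g, 'b) monoid_scheme \<Rightarrow> ('g \<Rightarrow> 'a::ring_1) \<Rightarrow> 'g \<times> 'g \<Rightarrow> 'a \<Rightarrow> 'a" where
  "SS_act S \<sigma> u a = \<sigma> (fst u) * a * \<sigma> (inv\<^bsub>S\<^esub> (snd u))"

definition fixed_pts :: "('g, 'b) monoid_scheme \<Rightarrow> ('g \<Rightarrow> 'a::ring_1) \<Rightarrow> ('g \<times> 'g) set \<Rightarrow> 'a set" where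
  "fixed_pts S \<sigma> U = {a. \<forall>u\<in>U. SS_act S \<sigma> u a = a}"

(* relative trace tr_V^U : A^V -> A^U, summing over representatives of the left cosets uV *)
definition rel_trace ::
  "('g, 'b) monoid_scheme \<Rightarrow> ('g \<Rightarrow> 'a::ring_1) \<Rightarrow> ('g \<times> 'g) set \<Rightarrow> ('g \<times> 'g) set \<Rightarrow> 'a \<Rightarrow> 'a" where
  "rel_trace S \<sigma> U V a =
     (\<Sum>C\<in>{u <#\<^bsub>S \<times>\<times> S\<^esub> V | u. u \<in> U}. SS_act S \<sigma> (SOME u. u \<in> C) a)"

definition brauer_kernel ::
  "('o::comm_ring_1 \<Rightarrow> 'a::ring_1 \<Rightarrow> 'a) \<Rightarrow> 'o set \<Rightarrow> ('g, 'b) monoid_scheme \<Rightarrow> ('g \<Rightarrow> 'a)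
     \<Rightarrow> ('g \<times> 'g) set \<Rightarrow> 'a set" where
  "brauer_kernel scale m S \<sigma> U = module.span scale
     ({scale r a | r a. r \<in> m \<and> a \<in> fixed_pts S \<sigma> U} \<union>
      (\<Union>V\<in>{V. subgroup V (S \<times>\<times> S) \<and> V \<subset> U}. rel_trace S \<sigma> U V ` fixed_pts S \<sigma> V))"

(* A(U) = A^U / (m A^U + sum_{V<U} tr_V^U(A^V)) is nonzero *)
definition brauer_nonzero ::
  "('o::comm_ring_1 \<Rightarrow> 'a::ring_1 \<Rightarrow> 'a) \<Rightarrow> 'o set \<Rightarrow> ('g, 'b) monoid_scheme \<Rightarrow> ('g \<Rightarrow> 'a)
     \<Rightarrow> ('g \<times> 'g) set \<Rightarrow> bool" where
  "brauer_nonzero scale m S \<sigma> U \<longleftrightarrow> \<not> fixed_pts S \<sigma> U \<subseteq> brauer_kernel scale m S \<sigma> U"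

definition Delta :: "('g \<Rightarrow> 'g) \<Rightarrow> 'g set \<Rightarrow> ('g \<times> 'g) set" where
  "Delta \<phi> P = {(\<phi> x, x) | x. x \<in> P}"

definition fusion_hom ::
  "('o::comm_ring_1 \<Rightarrow> 'a::ring_1 \<Rightarrow> 'a) \<Rightarrow> 'o set \<Rightarrow> ('g, 'b) monoid_scheme \<Rightarrow> ('g \<Rightarrow> 'a)
     \<Rightarrow> 'g set \<Rightarrow> 'g set \<Rightarrow> ('g \<Rightarrow> 'g) \<Rightarrow> bool" where
  "fusion_hom scale m S \<sigma> P Q \<phi> \<longleftrightarrow>
     subgroup P S \<and> subgroup Q S \<and> \<phi> ` P \<subseteq> Q \<and> inj_on \<phi> P \<and>
     (\<forall>x\<in>P. \<forall>y\<in>P. \<phi> (x \<otimes>\<^bsub>S\<^esub> y) = \<phi> x \<otimes>\<^bsub>S\<^esub> \<phi> y) \<and>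
     brauer_nonzero scale m S \<sigma> (Delta \<phi> P)"

definition divisible ::
  "('o::comm_ring_1 \<Rightarrow> 'a::ring_1 \<Rightarrow> 'a) \<Rightarrow> 'o set \<Rightarrow> ('g, 'b) monoid_scheme \<Rightarrow> ('g \<Rightarrow> 'a) \<Rightarrow> bool" where
  "divisible scale m S \<sigma> \<longleftrightarrow>
     (\<forall>P Q. subgroup P S \<and> subgroup Q S \<and> P \<subseteq> Q \<longrightarrow> fusion_hom scale m S \<sigma> P Q id) \<and>
     (\<forall>P Q R \<phi> \<psi>. fusion_hom scale m S \<sigma> P Q \<phi> \<and> fusion_hom scale m S \<sigma> Q R \<psi>
        \<longrightarrow> fusion_hom scale m S \<sigma> P R (\<psi> \<circ> \<phi>)) \<and>
     (\<forall>P Q \<phi>. fusion_hom scale m S \<sigma> P Q \<phi> \<longrightarrow>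
        fusion_hom scale m S \<sigma> P (\<phi> ` P) \<phi> \<and>
        fusion_hom scale m S \<sigma> (\<phi> ` P) P (inv_into P \<phi>))"

end

theory Submission
  imports Defs "HOL-Algebra.Group_Action"
begin


lemma mk_group_action:
  fixes G (structure)
  assumes grp: "group G"
    and closed: "\<And>g x. g \<in> carrier G \<Longrightarrow> x \<in> X \<Longrightarrow> act g x \<in> X"
    and one: "\<And>x. x \<in> X \<Longrightarrow> act \<one> x = x"
    and mult: "\<And>g h x. g \<in> carrier G \<Longrightarrow> h \<in> carrier G \<Longrightarrow> x \<in> X \<Longrightarrow> act (g \<otimes> h) x = act g (act h x)"
  shows "group_action G X (\<lambda>g. restrict (act g) X)"
proof -
  interpret group G by fact
  have bij: "restrict (act g) X \<in> Bij X" if g: "g \<in> carrier G" for g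
  proof -
    have "inj_on (act g) X"
    proof (rule inj_onI)
      fix x y assume "x \<in> X" "y \<in> X" "act g x = act g y"
      then have "act (inv g) (act g x) = act (inv g) (act g y)" by simp
      then show "x = y" using g \<open>x \<in> X\<close> \<open>y \<in> X\<close> by (simp add: mult[symmetric] one)
    qed
    moreover have "act g ` X = X"
    proof
      show "act g ` X \<subseteq> X" using closed g by auto
      show "X \<subseteq> act g ` X"
      proof
        fix y assume y: "y \<in> X"
        have "y = act g (act (inv g) y)" using g y by (simp add: mult[symmetric] one)
        then show "y \<in> act g ` X" using closed g y by blast
      qed
    qed
    ultimately show ?thesis by (simp add: Bij_def bij_betw_def)
  qed
  show ?thesis
    unfolding group_action_def
  proof (rule group_hom.intro[OF grp group_BijGroup], rule group_hom_axioms.intro, rule homI)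
    fix g assume "g \<in> carrier G"
    then show "restrict (act g) X \<in> carrier (BijGroup X)" using bij by (simp add: BijGroup_def)
  next
    fix x y assume x: "x \<in> carrier G" and y: "y \<in> carrier G"
    have "restrict (act x) X \<otimes>\<^bsub>BijGroup X\<^esub> restrict (act y) X
        = compose X (restrict (act x) X) (restrict (act y) X)"
      using bij[OF x] bij[OF y] by (simp add: BijGroup_def)
    also have "\<dots> = restrict (act (x \<otimes> y)) X"
      using x y by (auto simp: compose_def mult closed)
    finally show "restrict (act (x \<otimes> y)) X =
      restrict (act x) X \<otimes>\<^bsub>BijGroup X\<^esub> restrict (act y) X" by simp
  qed
qed

lemma orbit_restrict:
  "x \<in> X \<Longrightarrow> orbit G (\<lambda>g. restrict (act g) X) x = (\<lambda>g. act g x) ` carrier G"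
  by (auto simp: orbit_def)

lemma p_orbit_sum:
  fixes G (structure) and act :: "'g \<Rightarrow> 'x \<Rightarrow> 'x" and f :: "'x \<Rightarrow> 'r::comm_ring_1"
  assumes grp: "group G" and finG: "finite (carrier G)" and cardG: "card (carrier G) = p ^ k"
    and pr: "prime p" and finX: "finite X"
    and closed: "\<And>g x. g \<in> carrier G \<Longrightarrow> x \<in> X \<Longrightarrow> act g x \<in> X"
    and one: "\<And>x. x \<in> X \<Longrightarrow> act \<one> x = x"
    and mult: "\<And>g h x. g \<in> carrier G \<Longrightarrow> h \<in> carrier G \<Longrightarrow> x \<in> X \<Longrightarrow> act (g \<otimes> h) x = act g (act h x)"
    and nofix: "\<And>x. x \<in> X \<Longrightarrow> \<exists>g\<in>carrier G. act g x \<noteq> x"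
    and finv: "\<And>g x. g \<in> carrier G \<Longrightarrow> x \<in> X \<Longrightarrow> f (act g x) = f x"
  shows "\<exists>r. sum f X = of_nat p * r"
proof -
  interpret ga: group_action G X "\<lambda>g. restrict (act g) X"
    by (rule mk_group_action[OF grp closed one mult])
  have orb: "\<exists>r. (\<Sum>x\<in>Ob. f x) = of_nat p * r" if Ob: "Ob \<in> orbits G X (\<lambda>g. restrict (act g) X)" for Ob
  proof -
    obtain x where x: "x \<in> X" and Ox: "Ob = orbit G (\<lambda>g. restrict (act g) X) x"
      using Ob by (auto simp: orbits_def)
    have Ob': "Ob = (\<lambda>g. act g x) ` carrier G" using Ox orbit_restrict[OF x] by simp
    have "card Ob * card (stabilizer G (\<lambda>g. restrict (act g) X) x) = p ^ k"
      using ga.orbit_stabilizer_theorem[OF x] Ox cardG by (simp add: Coset.order_def)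
    then have "card Ob dvd p ^ k" by (metis dvd_triv_left)
    then obtain i where i: "card Ob = p ^ i" using divides_primepow_nat[OF pr] by blast
    have "i \<noteq> 0"
    proof
      assume "i = 0"
      then have c1: "card Ob = 1" using i by simp
      have "x \<in> Ob" using Ob' one[OF x] monoid.one_closed[OF group.is_monoid[OF grp]] by force
      then have "Ob = {x}" using c1 by (metis card_1_singletonE singletonD)
      then have "\<forall>g\<in>carrier G. act g x = x" using Ob' by auto
      then show False using nofix[OF x] by blast
    qed
    then obtain j where j: "card Ob = p * p ^ j" using i by (cases i) auto
    have fy: "\<forall>y\<in>Ob. f y = f x" using Ob' finv[OF _ x] by auto
    have "(\<Sum>y\<in>Ob. f y) = (\<Sum>y\<in>Ob. f x)"
      using fy by (intro sum.cong) auto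
    also have "\<dots> = of_nat p * (of_nat (p ^ j) * f x)" using j by simp
    finally show ?thesis by blast
  qed
  then obtain r where r: "\<And>Ob. Ob \<in> orbits G X (\<lambda>g. restrict (act g) X) \<Longrightarrow> (\<Sum>x\<in>Ob. f x) = of_nat p * r Ob"
    by metis
  have "sum f X = (\<Sum>Ob\<in>orbits G X (\<lambda>g. restrict (act g) X). \<Sum>x\<in>Ob. f x)"
    using ga.disjoint_sum[OF finX, of f] by simp
  also have "\<dots> = (\<Sum>Ob\<in>orbits G X (\<lambda>g. restrict (act g) X). of_nat p * r Ob)"
    using r by (auto intro!: sum.cong)
  also have "\<dots> = of_nat p * (\<Sum>Ob\<in>orbits G X (\<lambda>g. restrict (act g) X). r Ob)"
    by (simp add: sum_distrib_left)
  finally show ?thesis by blast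
qed



locale bsetup = module scale
  for scale :: "'o::idom \<Rightarrow> 'a::ring_1 \<Rightarrow> 'a" +
  fixes S :: "('g, 'b) monoid_scheme" and \<sigma> :: "'g \<Rightarrow> 'a" and m :: "'o set" and p :: nat
    and Y :: "'a set"
  assumes smult1: "\<And>r a b. scale r (a * b) = scale r a * b"
    and smult2: "\<And>r a b. scale r (a * b) = a * scale r b"
    and grp: "group S" and finS: "finite (carrier S)" and pr: "prime p"
    and pm: "of_nat p \<in> m" and idl: "is_ideal m" and one_m: "1 \<notin> m"
    and shom: "\<And>s t. s \<in> carrier S \<Longrightarrow> t \<in> carrier S \<Longrightarrow> \<sigma> (s \<otimes>\<^bsub>S\<^esub> t) = \<sigma> s * \<sigma> t"
    and s1: "\<sigma> \<one>\<^bsub>S\<^esub> = 1"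
    and indep: "independent Y" and spanY: "span Y = UNIV"
    and Yinv: "SS_invariant S \<sigma> Y"
    and pgrp: "\<exists>n. card (carrier S) = p ^ n"
begin

interpretation G: group S by (rule grp)

lemma grp2: "group (S \<times>\<times> S)" using DirProd_group[OF grp grp] .

lemma sinv_l: "s \<in> carrier S \<Longrightarrow> \<sigma> (inv\<^bsub>S\<^esub> s) * \<sigma> s = 1"
  by (metis G.inv_closed G.l_inv s1 shom)
lemma sinv_r: "s \<in> carrier S \<Longrightarrow> \<sigma> s * \<sigma> (inv\<^bsub>S\<^esub> s) = 1"
  by (metis G.inv_closed G.r_inv s1 shom)

abbreviation act where "act u a \<equiv> SS_act S \<sigma> u a"

lemma act_one: "act (\<one>\<^bsub>S\<^esub>, \<one>\<^bsub>S\<^esub>) a = a"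
  by (simp add: SS_act_def s1)

lemma act_one': "act \<one>\<^bsub>S \<times>\<times> S\<^esub> a = a"
  by (simp add: act_one)

lemma act_mult:
  assumes "u \<in> carrier (S \<times>\<times> S)" "v \<in> carrier (S \<times>\<times> S)"
  shows "act (u \<otimes>\<^bsub>S \<times>\<times> S\<^esub> v) a = act u (act v a)"
proof -
  obtain s t s' t' where u: "u = (s, t)" and v: "v = (s', t')" by (cases u, cases v) auto
  have c: "s \<in> carrier S" "t \<in> carrier S" "s' \<in> carrier S" "t' \<in> carrier S" using assms u v by auto
  have "inv\<^bsub>S\<^esub> (t \<otimes>\<^bsub>S\<^esub> t') = inv\<^bsub>S\<^esub> t' \<otimes>\<^bsub>S\<^esub> inv\<^bsub>S\<^esub> t"
    using c by (simp add: G.inv_mult_group)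
  then show ?thesis using c u v
    by (simp add: SS_act_def shom mult.assoc)
qed

lemma act_inv:
  assumes "u \<in> carrier (S \<times>\<times> S)"
  shows "act (inv\<^bsub>S \<times>\<times> S\<^esub> u) (act u a) = a"
    and "act u (act (inv\<^bsub>S \<times>\<times> S\<^esub> u) a) = a"
proof -
  interpret G2: group "S \<times>\<times> S" by (rule grp2)
  have iu: "inv\<^bsub>S \<times>\<times> S\<^esub> u \<in> carrier (S \<times>\<times> S)" by (rule G2.inv_closed[OF assms])
  have "act (inv\<^bsub>S \<times>\<times> S\<^esub> u) (act u a) = act (inv\<^bsub>S \<times>\<times> S\<^esub> u \<otimes>\<^bsub>S \<times>\<times> S\<^esub> u) a"
    by (rule act_mult[symmetric, OF iu assms])
  also have "\<dots> = a" by (simp only: G2.l_inv[OF assms] act_one')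
  finally show "act (inv\<^bsub>S \<times>\<times> S\<^esub> u) (act u a) = a" .
  have "act u (act (inv\<^bsub>S \<times>\<times> S\<^esub> u) a) = act (u \<otimes>\<^bsub>S \<times>\<times> S\<^esub> inv\<^bsub>S \<times>\<times> S\<^esub> u) a"
    by (rule act_mult[symmetric, OF assms iu])
  also have "\<dots> = a" by (simp only: G2.r_inv[OF assms] act_one')
  finally show "act u (act (inv\<^bsub>S \<times>\<times> S\<^esub> u) a) = a" .
qed

lemma mult_hom: "module_hom scale scale (\<lambda>a. x * a * z)"
  by unfold_locales (simp_all add: algebra_simps smult1[symmetric] smult2[symmetric])

lemma act_sum: "act u (\<Sum>i\<in>I. scale (c i) (b i)) = (\<Sum>i\<in>I. scale (c i) (act u (b i)))"
proof -
  interpret h: module_hom scale scale "\<lambda>a. \<sigma> (fst u) * a * \<sigma> (inv\<^bsub>S\<^esub> (snd u))"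
    by (rule mult_hom)
  show ?thesis unfolding SS_act_def by (simp add: h.sum h.scale)
qed

lemma act_Y:
  assumes "u \<in> carrier (S \<times>\<times> S)" "y \<in> Y"
  shows "act u y \<in> Y"
proof -
  obtain s t where u: "u = (s, t)" by (cases u)
  have c: "s \<in> carrier S" "inv\<^bsub>S\<^esub> t \<in> carrier S" using assms u by auto
  have "\<sigma> s * y \<in> Y" using Yinv c(1) assms(2) unfolding SS_invariant_def by blast
  then have "\<sigma> s * y * \<sigma> (inv\<^bsub>S\<^esub> t) \<in> Y" using Yinv c(2) unfolding SS_invariant_def by blast
  then show ?thesis using u by (simp add: SS_act_def)
qed

lemma rep_act:
  assumes u: "u \<in> carrier (S \<times>\<times> S)" and y: "y \<in> Y"
  shows "representation Y (act u a) (act u y) = representation Y a y"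
proof -
  let ?R = "representation Y a"
  let ?F = "{b. ?R b \<noteq> 0}"
  have finF: "finite ?F" by (rule finite_representation)
  have FY: "?F \<subseteq> Y" using representation_ne_zero by blast
  have a: "a = (\<Sum>b\<in>?F. scale (?R b) b)"
    using sum_nonzero_representation_eq[OF indep] spanY by simp
  have "act u a = (\<Sum>b\<in>?F. scale (?R b) (act u b))"
    by (subst a) (rule act_sum)
  then have "representation Y (act u a) = (\<lambda>z. \<Sum>b\<in>?F. representation Y (scale (?R b) (act u b)) z)"
    using representation_sum[OF indep, of ?F "\<lambda>b. scale (?R b) (act u b)"] spanY by simp
  also have "\<dots> = (\<lambda>z. \<Sum>b\<in>?F. ?R b * representation Y (act u b) z)"
    using representation_scale[OF indep] spanY by simp
  finally have e: "representation Y (act u a) (act u y) = (\<Sum>b\<in>?F. ?R b * representation Y (act u b) (act u y))"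
    by simp
  have "\<And>b. b \<in> ?F \<Longrightarrow> representation Y (act u b) (act u y) = (if b = y then 1 else 0)"
  proof -
    fix b assume b: "b \<in> ?F"
    then have bY: "b \<in> Y" using FY by blast
    have "act u y = act u b \<longleftrightarrow> y = b"
      by (metis act_inv(1) u)
    then show "representation Y (act u b) (act u y) = (if b = y then 1 else 0)"
      using representation_basis[OF indep act_Y[OF u bY]] by auto
  qed
  then have "representation Y (act u a) (act u y) = (\<Sum>b\<in>?F. if b = y then ?R b else 0)"
    unfolding e by (intro sum.cong) auto
  also have "\<dots> = ?R y"
    using finF by (simp add: sum.delta)
  finally show ?thesis .
qed

lemma rep_act':
  assumes u: "u \<in> carrier (S \<times>\<times> S)" and z: "z \<in> Y"
  shows "representation Y (act u a) z = representation Y a (act (inv\<^bsub>S \<times>\<times> S\<^esub> u) z)"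
proof -
  interpret G2: group "S \<times>\<times> S" by (rule grp2)
  have iu: "inv\<^bsub>S \<times>\<times> S\<^esub> u \<in> carrier (S \<times>\<times> S)" by (rule G2.inv_closed[OF u])
  have "representation Y (act u a) z = representation Y (act u a) (act u (act (inv\<^bsub>S \<times>\<times> S\<^esub> u) z))"
    using act_inv(2)[OF u] by simp
  also have "\<dots> = representation Y a (act (inv\<^bsub>S \<times>\<times> S\<^esub> u) z)"
    by (rule rep_act[OF u act_Y[OF iu z]])
  finally show ?thesis .
qed


lemma m_add: "x \<in> m \<Longrightarrow> y \<in> m \<Longrightarrow> x + y \<in> m"
  using idl by (simp add: is_ideal_def)
lemma m_mult: "x \<in> m \<Longrightarrow> r * x \<in> m"
  using idl by (simp add: is_ideal_def)
lemma m_zero: "0 \<in> m"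
  using idl by (simp add: is_ideal_def)
lemma m_p: "of_nat p * r \<in> m"
  using m_mult[OF pm, of r] by (simp add: mult.commute)

lemma subgroup_fin:
  assumes "subgroup U (S \<times>\<times> S)" shows "finite U"
proof -
  have "U \<subseteq> carrier S \<times> carrier S" using subgroup.subset[OF assms] by simp
  then show ?thesis using finS finite_subset by blast
qed

lemma nonzero_of_fixed:
  assumes U: "subgroup U (S \<times>\<times> S)" and cardU: "card U = p ^ k"
    and y: "y \<in> Y" and fx: "\<forall>u\<in>U. act u y = y"
  shows "brauer_nonzero scale m S \<sigma> U"
proof -
  interpret G2: group "S \<times>\<times> S" by (rule grp2)
  let ?K = "{a. representation Y a y \<in> m}"
  have subK: "subspace ?K"
    unfolding subspace_def
    using spanY
    by (auto simp: representation_zero representation_add[OF indep] representation_scale[OF indep]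
        m_zero m_add m_mult)
  have gen1: "scale r a \<in> ?K" if "r \<in> m" for r a
    using that spanY m_mult[OF that, of "representation Y a y"]
    by (simp add: representation_scale[OF indep] mult.commute)
  have gen2: "rel_trace S \<sigma> U V a \<in> ?K" if V: "subgroup V (S \<times>\<times> S)" "V \<subset> U" for V a
  proof -
    let ?Cs = "{u <#\<^bsub>S \<times>\<times> S\<^esub> V | u. u \<in> U}"
    have Vc: "V \<subseteq> carrier (S \<times>\<times> S)" using subgroup.subset[OF V(1)] .
    have Uc: "U \<subseteq> carrier (S \<times>\<times> S)" using subgroup.subset[OF U] .
    have some: "(SOME u. u \<in> C) \<in> U" if C: "C \<in> ?Cs" for C
    proof -
      obtain u0 where u0: "u0 \<in> U" "C = u0 <#\<^bsub>S \<times>\<times> S\<^esub> V" using C by blast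
      have "u0 \<in> C" using u0 subgroup.one_closed[OF V(1)] Uc
        by (auto simp: l_coset_def intro!: bexI[of _ "\<one>\<^bsub>S \<times>\<times> S\<^esub>"])
      then have "(SOME u. u \<in> C) \<in> C" by (rule someI)
      then obtain v where v: "v \<in> V" "(SOME u. u \<in> C) = u0 \<otimes>\<^bsub>S \<times>\<times> S\<^esub> v"
        using u0 by (auto simp: l_coset_def)
      have "v \<in> U" using v(1) V(2) by blast
      then show ?thesis using v(2) subgroup.m_closed[OF U u0(1)] by simp
    qed
    have "representation Y (rel_trace S \<sigma> U V a) y
        = (\<Sum>C\<in>?Cs. representation Y (act (SOME u. u \<in> C) a) y)"
      unfolding rel_trace_def
      using representation_sum[OF indep, where I = ?Cs and v = "\<lambda>C. act (SOME u. u \<in> C) a"] spanY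
      by simp
    also have "\<dots> = (\<Sum>C\<in>?Cs. representation Y a y)"
    proof (rule sum.cong[OF refl])
      fix C assume C: "C \<in> ?Cs"
      define w where "w = (SOME u. u \<in> C)"
      have w: "w \<in> U" using some[OF C] w_def by simp
      have iw: "inv\<^bsub>S \<times>\<times> S\<^esub> w \<in> U" using subgroup.m_inv_closed[OF U w] .
      show "representation Y (act (SOME u. u \<in> C) a) y = representation Y a y"
        unfolding w_def[symmetric]
        using rep_act'[of w y a] w Uc y fx iw by auto
    qed
    finally have eq: "representation Y (rel_trace S \<sigma> U V a) y = (\<Sum>C\<in>?Cs. representation Y a y)" .
    have "\<exists>r. (\<Sum>C\<in>?Cs. representation Y a y) = of_nat p * r"
    proof (rule p_orbit_sum[where G = "(S \<times>\<times> S)\<lparr>carrier := U\<rparr>" and k = k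
          and act = "\<lambda>u C. u <#\<^bsub>S \<times>\<times> S\<^esub> C"])
      show "group ((S \<times>\<times> S)\<lparr>carrier := U\<rparr>)" by (rule subgroup.subgroup_is_group[OF U grp2])
      show "finite (carrier ((S \<times>\<times> S)\<lparr>carrier := U\<rparr>))" using subgroup_fin[OF U] by simp
      show "card (carrier ((S \<times>\<times> S)\<lparr>carrier := U\<rparr>)) = p ^ k" using cardU by simp
      show "prime p" by (rule pr)
      have "?Cs = (\<lambda>u. u <#\<^bsub>S \<times>\<times> S\<^esub> V) ` U" by blast
      then show "finite ?Cs" using subgroup_fin[OF U] by simp
      show "g <#\<^bsub>S \<times>\<times> S\<^esub> C \<in> ?Cs" if g0: "g \<in> carrier ((S \<times>\<times> S)\<lparr>carrier := U\<rparr>)" and C0: "C \<in> ?Cs" for g C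
      proof -
        obtain u0 where u0: "u0 \<in> U" "C = u0 <#\<^bsub>S \<times>\<times> S\<^esub> V" using C0 by blast
        have g: "g \<in> U" using g0 by simp
        have "g <#\<^bsub>S \<times>\<times> S\<^esub> C = (g \<otimes>\<^bsub>S \<times>\<times> S\<^esub> u0) <#\<^bsub>S \<times>\<times> S\<^esub> V"
          using u0(2) G2.lcos_m_assoc[OF Vc, of g u0] g u0(1) Uc by blast
        then show ?thesis using subgroup.m_closed[OF U g u0(1)] by blast
      qed
      show "\<one>\<^bsub>(S \<times>\<times> S)\<lparr>carrier := U\<rparr>\<^esub> <#\<^bsub>S \<times>\<times> S\<^esub> C = C" if C0: "C \<in> ?Cs" for C
      proof -
        obtain u0 where u0: "u0 \<in> U" "C = u0 <#\<^bsub>S \<times>\<times> S\<^esub> V" using C0 by blast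
        have "C \<subseteq> carrier (S \<times>\<times> S)" using u0 Uc Vc G2.l_coset_subset_G by blast
        then show ?thesis using G2.lcos_mult_one by simp
      qed
      show "(g \<otimes>\<^bsub>(S \<times>\<times> S)\<lparr>carrier := U\<rparr>\<^esub> h) <#\<^bsub>S \<times>\<times> S\<^esub> C = g <#\<^bsub>S \<times>\<times> S\<^esub> (h <#\<^bsub>S \<times>\<times> S\<^esub> C)"
        if g0: "g \<in> carrier ((S \<times>\<times> S)\<lparr>carrier := U\<rparr>)" and h0: "h \<in> carrier ((S \<times>\<times> S)\<lparr>carrier := U\<rparr>)" and C0: "C \<in> ?Cs" for g h C
      proof -
        obtain u0 where u0: "u0 \<in> U" "C = u0 <#\<^bsub>S \<times>\<times> S\<^esub> V" using C0 by blast
        have "C \<subseteq> carrier (S \<times>\<times> S)" using u0 Uc Vc G2.l_coset_subset_G by blast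
        moreover have "g \<in> carrier (S \<times>\<times> S)" "h \<in> carrier (S \<times>\<times> S)" using g0 h0 Uc by auto
        ultimately show ?thesis using G2.lcos_m_assoc by simp
      qed
      show "\<exists>g\<in>carrier ((S \<times>\<times> S)\<lparr>carrier := U\<rparr>). g <#\<^bsub>S \<times>\<times> S\<^esub> C \<noteq> C" if C0: "C \<in> ?Cs" for C
      proof (rule ccontr)
        assume "\<not> ?thesis"
        then have all: "\<forall>g\<in>U. g <#\<^bsub>S \<times>\<times> S\<^esub> C = C" by simp
        obtain u0 where u0: "u0 \<in> U" "C = u0 <#\<^bsub>S \<times>\<times> S\<^esub> V" using C0 by blast
        have iu0: "inv\<^bsub>S \<times>\<times> S\<^esub> u0 \<in> U" using subgroup.m_inv_closed[OF U u0(1)] .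
        have "C = inv\<^bsub>S \<times>\<times> S\<^esub> u0 <#\<^bsub>S \<times>\<times> S\<^esub> C" using all iu0 by simp
        also have "\<dots> = (inv\<^bsub>S \<times>\<times> S\<^esub> u0 \<otimes>\<^bsub>S \<times>\<times> S\<^esub> u0) <#\<^bsub>S \<times>\<times> S\<^esub> V"
          using u0(2) G2.lcos_m_assoc[OF Vc, of "inv\<^bsub>S \<times>\<times> S\<^esub> u0" u0] iu0 u0(1) Uc by blast
        also have "\<dots> = V" using u0(1) Uc G2.lcos_mult_one[OF Vc] G2.l_inv[of u0] by auto
        finally have CV: "C = V" .
        obtain w where w: "w \<in> U" "w \<notin> V" using V(2) by blast
        have "w <#\<^bsub>S \<times>\<times> S\<^esub> V = V" using all w CV by simp
        moreover have "w \<in> w <#\<^bsub>S \<times>\<times> S\<^esub> V" using w Uc subgroup.one_closed[OF V(1)]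
          by (auto simp: l_coset_def intro!: bexI[of _ "\<one>\<^bsub>S \<times>\<times> S\<^esub>"])
        ultimately show False using w by simp
      qed
    qed simp
    then have "(\<Sum>C\<in>?Cs. representation Y a y) \<in> m" using m_p by metis
    then show ?thesis using eq by simp
  qed
  have "brauer_kernel scale m S \<sigma> U \<subseteq> ?K"
    unfolding brauer_kernel_def
  proof (rule span_minimal[OF _ subK])
    have g1: "{scale r a | r a. r \<in> m \<and> a \<in> fixed_pts S \<sigma> U} \<subseteq> ?K"
    proof
      fix x assume "x \<in> {scale r a | r a. r \<in> m \<and> a \<in> fixed_pts S \<sigma> U}"
      then obtain r a where "r \<in> m" "x = scale r a" by blast
      then show "x \<in> ?K" using gen1 by blast
    qed
    have g2: "(\<Union>V\<in>{V. subgroup V (S \<times>\<times> S) \<and> V \<subset> U}. rel_trace S \<sigma> U V ` fixed_pts S \<sigma> V) \<subseteq> ?K"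
    proof
      fix x assume "x \<in> (\<Union>V\<in>{V. subgroup V (S \<times>\<times> S) \<and> V \<subset> U}. rel_trace S \<sigma> U V ` fixed_pts S \<sigma> V)"
      then obtain V a where "subgroup V (S \<times>\<times> S)" "V \<subset> U" "x = rel_trace S \<sigma> U V a" by blast
      then show "x \<in> ?K" using gen2 by blast
    qed
    show "{scale r a | r a. r \<in> m \<and> a \<in> fixed_pts S \<sigma> U} \<union>
      (\<Union>V\<in>{V. subgroup V (S \<times>\<times> S) \<and> V \<subset> U}. rel_trace S \<sigma> U V ` fixed_pts S \<sigma> V) \<subseteq> ?K"
      using g1 g2 by (rule Un_least)
  qed
  moreover have "y \<notin> ?K" using representation_basis[OF indep y] one_m by simp
  moreover have "y \<in> fixed_pts S \<sigma> U" using fx by (simp add: fixed_pts_def)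
  ultimately show ?thesis unfolding brauer_nonzero_def by blast
qed


lemma coset_some:
  assumes V: "subgroup V (S \<times>\<times> S)" and u0: "u0 \<in> carrier (S \<times>\<times> S)"
    and fx: "\<forall>v\<in>V. act v b = b"
  shows "act (SOME u. u \<in> u0 <#\<^bsub>S \<times>\<times> S\<^esub> V) b = act u0 b"
proof -
  let ?C = "u0 <#\<^bsub>S \<times>\<times> S\<^esub> V"
  have "u0 \<in> ?C" using u0 subgroup.one_closed[OF V]
    by (auto simp: l_coset_def intro!: bexI[of _ "\<one>\<^bsub>S \<times>\<times> S\<^esub>"])
  then have "(SOME u. u \<in> ?C) \<in> ?C" by (rule someI)
  then obtain v where v: "v \<in> V" "(SOME u. u \<in> ?C) = u0 \<otimes>\<^bsub>S \<times>\<times> S\<^esub> v"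
    by (auto simp: l_coset_def)
  have vc: "v \<in> carrier (S \<times>\<times> S)" using subgroup.subset[OF V] v(1) by blast
  show ?thesis using v act_mult[OF u0 vc, of b] fx by simp
qed

lemma trace_orbit:
  assumes U: "subgroup U (S \<times>\<times> S)" and y0: "y0 \<in> Y"
  defines "V \<equiv> {u \<in> U. act u y0 = y0}"
  shows "subgroup V (S \<times>\<times> S)"
    and "rel_trace S \<sigma> U V y0 = (\<Sum>z\<in>(\<lambda>u. act u y0) ` U. z)"
proof -
  interpret G2: group "S \<times>\<times> S" by (rule grp2)
  have Uc: "U \<subseteq> carrier (S \<times>\<times> S)" using subgroup.subset[OF U] .
  show V: "subgroup V (S \<times>\<times> S)"
  proof (rule G2.subgroupI)
    show "V \<subseteq> carrier (S \<times>\<times> S)" using Uc V_def by blast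
    have "\<one>\<^bsub>S \<times>\<times> S\<^esub> \<in> V" using subgroup.one_closed[OF U] act_one' V_def by simp
    then show "V \<noteq> {}" by blast
    show "inv\<^bsub>S \<times>\<times> S\<^esub> a \<in> V" if a: "a \<in> V" for a
    proof -
      have "a \<in> U" "act a y0 = y0" using a V_def by auto
      moreover have "a \<in> carrier (S \<times>\<times> S)" using a V_def Uc by blast
      ultimately show ?thesis using act_inv(1)[of a y0] subgroup.m_inv_closed[OF U] V_def by auto
    qed
    show "a \<otimes>\<^bsub>S \<times>\<times> S\<^esub> b \<in> V" if "a \<in> V" "b \<in> V" for a b
    proof -
      have "a \<in> carrier (S \<times>\<times> S)" "b \<in> carrier (S \<times>\<times> S)" using that V_def Uc by blast+
      then show ?thesis using that act_mult subgroup.m_closed[OF U] V_def by auto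
    qed
  qed
  let ?Cs = "{u <#\<^bsub>S \<times>\<times> S\<^esub> V | u. u \<in> U}"
  let ?F = "\<lambda>C. act (SOME u. u \<in> C) y0"
  have fxV: "\<forall>v\<in>V. act v y0 = y0" using V_def by simp
  have Fc: "?F (u <#\<^bsub>S \<times>\<times> S\<^esub> V) = act u y0" if "u \<in> U" for u
    using coset_some[OF V _ fxV] that Uc by blast
  have bij: "bij_betw ?F ?Cs ((\<lambda>u. act u y0) ` U)"
  proof (rule bij_betw_imageI)
    show "inj_on ?F ?Cs"
    proof (rule inj_onI)
      fix C1 C2 assume C1: "C1 \<in> ?Cs" and C2: "C2 \<in> ?Cs" and eq: "?F C1 = ?F C2"
      obtain u1 where u1: "u1 \<in> U" "C1 = u1 <#\<^bsub>S \<times>\<times> S\<^esub> V" using C1 by blast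
      obtain u2 where u2: "u2 \<in> U" "C2 = u2 <#\<^bsub>S \<times>\<times> S\<^esub> V" using C2 by blast
      have u1c: "u1 \<in> carrier (S \<times>\<times> S)" and u2c: "u2 \<in> carrier (S \<times>\<times> S)" using u1 u2 Uc by blast+
      have e: "act u1 y0 = act u2 y0" using eq Fc u1 u2 by simp
      have iu2: "inv\<^bsub>S \<times>\<times> S\<^esub> u2 \<in> carrier (S \<times>\<times> S)" by (rule G2.inv_closed[OF u2c])
      have "act (inv\<^bsub>S \<times>\<times> S\<^esub> u2 \<otimes>\<^bsub>S \<times>\<times> S\<^esub> u1) y0 = act (inv\<^bsub>S \<times>\<times> S\<^esub> u2) (act u2 y0)"
        using act_mult[OF iu2 u1c] e by simp
      also have "\<dots> = y0" using act_inv(1)[OF u2c] .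
      finally have "inv\<^bsub>S \<times>\<times> S\<^esub> u2 \<otimes>\<^bsub>S \<times>\<times> S\<^esub> u1 \<in> V"
        using V_def subgroup.m_closed[OF U subgroup.m_inv_closed[OF U u2(1)] u1(1)] by simp
      then have "u1 \<in> u2 <#\<^bsub>S \<times>\<times> S\<^esub> V"
        using subgroup.lcos_module_rev[OF V grp2 u2c u1c] by blast
      then have "u2 <#\<^bsub>S \<times>\<times> S\<^esub> V = u1 <#\<^bsub>S \<times>\<times> S\<^esub> V"
        using G2.l_repr_independence[OF _ u2c V] by blast
      then show "C1 = C2" using u1 u2 by simp
    qed
    show "?F ` ?Cs = (\<lambda>u. act u y0) ` U"
    proof
      show "?F ` ?Cs \<subseteq> (\<lambda>u. act u y0) ` U" using Fc by auto
      show "(\<lambda>u. act u y0) ` U \<subseteq> ?F ` ?Cs"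
      proof
        fix z assume "z \<in> (\<lambda>u. act u y0) ` U"
        then obtain u where u: "u \<in> U" "z = act u y0" by blast
        then have "z = ?F (u <#\<^bsub>S \<times>\<times> S\<^esub> V)" using Fc by simp
        moreover have "u <#\<^bsub>S \<times>\<times> S\<^esub> V \<in> ?Cs" using u by blast
        ultimately show "z \<in> ?F ` ?Cs" by blast
      qed
    qed
  qed
  show "rel_trace S \<sigma> U V y0 = (\<Sum>z\<in>(\<lambda>u. act u y0) ` U. z)"
    unfolding rel_trace_def using sum.reindex_bij_betw[OF bij, of "\<lambda>z. z"] by simp
qed

lemma fixed_of_nonzero:
  assumes U: "subgroup U (S \<times>\<times> S)" and nz: "brauer_nonzero scale m S \<sigma> U"
  shows "\<exists>y\<in>Y. \<forall>u\<in>U. act u y = y"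
proof (rule ccontr)
  assume "\<not> ?thesis"
  then have nf: "\<And>y. y \<in> Y \<Longrightarrow> \<exists>u\<in>U. act u y \<noteq> y" by blast
  have Uc: "U \<subseteq> carrier (S \<times>\<times> S)" using subgroup.subset[OF U] .
  let ?H = "(S \<times>\<times> S)\<lparr>carrier := U\<rparr>"
  have "fixed_pts S \<sigma> U \<subseteq> brauer_kernel scale m S \<sigma> U"
  proof
    fix a assume a: "a \<in> fixed_pts S \<sigma> U"
    then have afx: "\<And>u. u \<in> U \<Longrightarrow> act u a = a" by (simp add: fixed_pts_def)
    let ?R = "representation Y a"
    let ?X = "{b. ?R b \<noteq> 0}"
    have finX: "finite ?X" by (rule finite_representation)
    have XY: "?X \<subseteq> Y" using representation_ne_zero by blast
    have Rinv: "?R (act u y) = ?R y" if "u \<in> U" "y \<in> Y" for u y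
      using rep_act[of u y a] that Uc afx by auto
    have Xcl: "act u y \<in> ?X" if "u \<in> U" "y \<in> ?X" for u y
    proof -
      have "y \<in> Y" using that(2) XY by blast
      then have "?R (act u y) = ?R y" using Rinv that(1) by blast
      then show ?thesis using that(2) by simp
    qed
    have aeq: "a = (\<Sum>b\<in>?X. scale (?R b) b)"
      using sum_nonzero_representation_eq[OF indep] spanY by simp
    interpret ga: group_action ?H ?X "\<lambda>u. restrict (act u) ?X"
    proof (rule mk_group_action)
      show "group ?H" by (rule subgroup.subgroup_is_group[OF U grp2])
      show "act g x \<in> ?X" if "g \<in> carrier ?H" "x \<in> ?X" for g x using that Xcl by simp
      show "act \<one>\<^bsub>?H\<^esub> x = x" for x using act_one' by simp
      show "act (g \<otimes>\<^bsub>?H\<^esub> h) x = act g (act h x)" if "g \<in> carrier ?H" "h \<in> carrier ?H" for g h x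
      proof -
        have "g \<in> carrier (S \<times>\<times> S)" "h \<in> carrier (S \<times>\<times> S)" using that Uc by auto
        then show ?thesis using act_mult[of g h x] by simp
      qed
    qed
    have "a = (\<Sum>Ob\<in>orbits ?H ?X (\<lambda>u. restrict (act u) ?X). \<Sum>b\<in>Ob. scale (?R b) b)"
      using aeq ga.disjoint_sum[OF finX, of "\<lambda>b. scale (?R b) b"] by simp
    also have "\<dots> \<in> brauer_kernel scale m S \<sigma> U"
      unfolding brauer_kernel_def
    proof (rule span_sum)
      fix Ob assume Ob: "Ob \<in> orbits ?H ?X (\<lambda>u. restrict (act u) ?X)"
      obtain y0 where y0: "y0 \<in> ?X" and Oby: "Ob = orbit ?H (\<lambda>u. restrict (act u) ?X) y0"
        using Ob by (auto simp: orbits_def)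
      have y0Y: "y0 \<in> Y" using y0 XY by blast
      have Ob': "Ob = (\<lambda>u. act u y0) ` U"
        using Oby orbit_restrict[OF y0, where G = ?H and act = "\<lambda>u b. SS_act S \<sigma> u b"] by simp
      define V where "V = {u \<in> U. act u y0 = y0}"
      have V: "subgroup V (S \<times>\<times> S)" using trace_orbit(1)[OF U y0Y] V_def by simp
      have tr: "rel_trace S \<sigma> U V y0 = (\<Sum>z\<in>Ob. z)" using trace_orbit(2)[OF U y0Y] V_def Ob' by simp
      have VU: "V \<subset> U" using nf[OF y0Y] V_def by auto
      have y0V: "y0 \<in> fixed_pts S \<sigma> V" using V_def by (simp add: fixed_pts_def)
      have "(\<Sum>b\<in>Ob. scale (?R b) b) = (\<Sum>b\<in>Ob. scale (?R y0) b)"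
        using Ob' Rinv y0Y by (intro sum.cong) auto
      also have "\<dots> = scale (?R y0) (rel_trace S \<sigma> U V y0)"
        using tr by (simp add: scale_sum_right)
      finally have e: "(\<Sum>b\<in>Ob. scale (?R b) b) = scale (?R y0) (rel_trace S \<sigma> U V y0)" .
      have "rel_trace S \<sigma> U V y0 \<in> (\<Union>V\<in>{V. subgroup V (S \<times>\<times> S) \<and> V \<subset> U}. rel_trace S \<sigma> U V ` fixed_pts S \<sigma> V)"
        using V VU y0V by blast
      then show "(\<Sum>b\<in>Ob. scale (?R b) b) \<in> span ({scale r a |r a. r \<in> m \<and> a \<in> fixed_pts S \<sigma> U} \<union>
          (\<Union>V\<in>{V. subgroup V (S \<times>\<times> S) \<and> V \<subset> U}. rel_trace S \<sigma> U V ` fixed_pts S \<sigma> V))"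
        unfolding e by (intro span_scale span_base) blast
    qed
    finally show "a \<in> brauer_kernel scale m S \<sigma> U" .
  qed
  then show False using nz by (simp add: brauer_nonzero_def)
qed


lemma rmult_sum: "(\<Sum>i\<in>I. scale (c i) (b i)) * z = (\<Sum>i\<in>I. scale (c i) (b i * z))"
  by (induction I rule: infinite_finite_induct) (simp_all add: distrib_right smult1)

lemma fixed_of_unit:
  assumes U: "subgroup U (S \<times>\<times> S)" and cardU: "card U = p ^ k"
    and y0: "y0 \<in> Y" and y0fx: "\<forall>s\<in>carrier S. act (s, s) y0 = y0"
    and aw: "a * w = 1" and wa: "w * a = 1"
    and afx: "\<forall>u\<in>U. act u a = a"
  shows "\<exists>y\<in>Y. \<forall>u\<in>U. act u y = y"
proof (rule ccontr)
  assume "\<not> ?thesis"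
  then have nf: "\<And>y. y \<in> Y \<Longrightarrow> \<exists>u\<in>U. act u y \<noteq> y" by blast
  have Uc: "U \<subseteq> carrier S \<times> carrier S" using subgroup.subset[OF U] by simp
  have wcomm: "\<sigma> (inv\<^bsub>S\<^esub> t) * w = w * \<sigma> (inv\<^bsub>S\<^esub> s)" if "(s, t) \<in> U" for s t
  proof -
    have st: "s \<in> carrier S" "t \<in> carrier S" using that Uc by auto
    have "act (s, t) a = a" using afx that by blast
    then have e: "\<sigma> s * a * \<sigma> (inv\<^bsub>S\<^esub> t) = a" by (simp add: SS_act_def)
    have "\<sigma> (inv\<^bsub>S\<^esub> s) * a = \<sigma> (inv\<^bsub>S\<^esub> s) * (\<sigma> s * a * \<sigma> (inv\<^bsub>S\<^esub> t))" using e by simp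
    also have "\<dots> = (\<sigma> (inv\<^bsub>S\<^esub> s) * \<sigma> s) * a * \<sigma> (inv\<^bsub>S\<^esub> t)" by (simp add: mult.assoc)
    also have "\<dots> = a * \<sigma> (inv\<^bsub>S\<^esub> t)" using sinv_l[OF st(1)] by simp
    finally have e2: "\<sigma> (inv\<^bsub>S\<^esub> s) * a = a * \<sigma> (inv\<^bsub>S\<^esub> t)" .
    have "\<sigma> (inv\<^bsub>S\<^esub> t) * w = (w * a) * \<sigma> (inv\<^bsub>S\<^esub> t) * w" using wa by simp
    also have "\<dots> = w * (a * \<sigma> (inv\<^bsub>S\<^esub> t)) * w" by (simp add: mult.assoc)
    also have "\<dots> = w * (\<sigma> (inv\<^bsub>S\<^esub> s) * a) * w" using e2 by simp
    also have "\<dots> = w * \<sigma> (inv\<^bsub>S\<^esub> s) * (a * w)" by (simp add: mult.assoc)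
    finally show ?thesis using aw by simp
  qed
  have y0comm: "\<sigma> (inv\<^bsub>S\<^esub> s) * y0 = y0 * \<sigma> (inv\<^bsub>S\<^esub> s)" if s: "s \<in> carrier S" for s
  proof -
    have isc: "inv\<^bsub>S\<^esub> s \<in> carrier S" using s by simp
    have "act (inv\<^bsub>S\<^esub> s, inv\<^bsub>S\<^esub> s) y0 = y0" using y0fx isc by blast
    then have e: "\<sigma> (inv\<^bsub>S\<^esub> s) * y0 * \<sigma> s = y0" using s by (simp add: SS_act_def)
    have "\<sigma> (inv\<^bsub>S\<^esub> s) * y0 = \<sigma> (inv\<^bsub>S\<^esub> s) * y0 * (\<sigma> s * \<sigma> (inv\<^bsub>S\<^esub> s))"
      using sinv_r[OF s] by simp
    also have "\<dots> = (\<sigma> (inv\<^bsub>S\<^esub> s) * y0 * \<sigma> s) * \<sigma> (inv\<^bsub>S\<^esub> s)" by (simp add: mult.assoc)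
    finally show ?thesis using e by simp
  qed
  let ?c = "representation Y a"
  let ?X = "{b. ?c b \<noteq> 0}"
  let ?h = "\<lambda>y. representation Y (y * w * y0) y0"
  have finX: "finite ?X" by (rule finite_representation)
  have XY: "?X \<subseteq> Y" using representation_ne_zero by blast
  have cinv: "?c (act u y) = ?c y" if "u \<in> U" "y \<in> Y" for u y
    using rep_act[of u y a] that Uc afx by auto
  have hinv: "?h (act u y) = ?h y" if u: "u \<in> U" for u y
  proof -
    obtain s t where st: "u = (s, t)" by (cases u)
    have stc: "s \<in> carrier S" "t \<in> carrier S" using u st Uc by auto
    have "act u y * w * y0 = \<sigma> s * y * (\<sigma> (inv\<^bsub>S\<^esub> t) * w) * y0"
      using st by (simp add: SS_act_def mult.assoc)
    also have "\<dots> = \<sigma> s * y * w * (\<sigma> (inv\<^bsub>S\<^esub> s) * y0)"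
      using wcomm[of s t] u st by (simp add: mult.assoc)
    also have "\<dots> = act (s, s) (y * w * y0)"
      using y0comm[OF stc(1)] by (simp add: SS_act_def mult.assoc)
    finally have "?h (act u y) = representation Y (act (s, s) (y * w * y0)) (act (s, s) y0)"
      using y0fx stc by simp
    also have "\<dots> = ?h y" using rep_act[of "(s, s)" y0 "y * w * y0"] stc y0 by simp
    finally show ?thesis .
  qed
  have "(\<Sum>y\<in>?X. ?c y * ?h y) = representation Y (\<Sum>y\<in>?X. scale (?c y) (y * w * y0)) y0"
    using representation_sum[OF indep, where I = ?X and v = "\<lambda>y. scale (?c y) (y * w * y0)"] spanY
      representation_scale[OF indep] by simp
  also have "(\<Sum>y\<in>?X. scale (?c y) (y * w * y0)) = (\<Sum>y\<in>?X. scale (?c y) y) * (w * y0)"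
    by (simp add: rmult_sum mult.assoc)
  also have "\<dots> = a * w * y0"
    using sum_nonzero_representation_eq[OF indep, of a] spanY by (simp add: mult.assoc)
  also have "\<dots> = y0" using aw by simp
  finally have sum1: "(\<Sum>y\<in>?X. ?c y * ?h y) = 1" using representation_basis[OF indep y0] by simp
  let ?H = "(S \<times>\<times> S)\<lparr>carrier := U\<rparr>"
  have "\<exists>r. (\<Sum>y\<in>?X. ?c y * ?h y) = of_nat p * r"
  proof (rule p_orbit_sum[where G = ?H and k = k and act = "\<lambda>u b. SS_act S \<sigma> u b"])
    show "group ?H" by (rule subgroup.subgroup_is_group[OF U grp2])
    show "finite (carrier ?H)" using subgroup_fin[OF U] by simp
    show "card (carrier ?H) = p ^ k" using cardU by simp
    show "prime p" by (rule pr)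
    show "finite ?X" by (rule finX)
    show "act g x \<in> ?X" if "g \<in> carrier ?H" "x \<in> ?X" for g x
    proof -
      have "x \<in> Y" using that(2) XY by blast
      then have "?c (act g x) = ?c x" using cinv that(1) by simp
      then show ?thesis using that(2) by simp
    qed
    show "act \<one>\<^bsub>?H\<^esub> x = x" for x using act_one' by simp
    show "act (g \<otimes>\<^bsub>?H\<^esub> h) x = act g (act h x)" if "g \<in> carrier ?H" "h \<in> carrier ?H" for g h x
    proof -
      have "g \<in> carrier (S \<times>\<times> S)" "h \<in> carrier (S \<times>\<times> S)" using that Uc by auto
      then show ?thesis using act_mult[of g h x] by simp
    qed
    show "\<exists>g\<in>carrier ?H. act g x \<noteq> x" if "x \<in> ?X" for x
      using nf[of x] that XY by auto
    show "?c (act g x) * ?h (act g x) = ?c x * ?h x" if "g \<in> carrier ?H" "x \<in> ?X" for g x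
      using cinv[of g x] hinv[of g x] that XY by auto
  qed
  then have "(1::'o) \<in> m" using sum1 m_p by metis
  then show False using one_m by simp
qed


end

context bsetup
begin
interpretation G: group S by (rule grp)
lemma act_fix_comm:
  assumes st: "s \<in> carrier S" "t \<in> carrier S" and b: "act (s, t) b = b"
  shows "\<sigma> s * b = b * \<sigma> t" and "\<sigma> (inv\<^bsub>S\<^esub> s) * b = b * \<sigma> (inv\<^bsub>S\<^esub> t)"
proof -
  have e: "\<sigma> s * b * \<sigma> (inv\<^bsub>S\<^esub> t) = b" using b by (simp add: SS_act_def)
  have "\<sigma> s * b = \<sigma> s * b * (\<sigma> (inv\<^bsub>S\<^esub> t) * \<sigma> t)" using sinv_l[OF st(2)] by simp
  also have "\<dots> = (\<sigma> s * b * \<sigma> (inv\<^bsub>S\<^esub> t)) * \<sigma> t" by (simp add: mult.assoc)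
  finally show "\<sigma> s * b = b * \<sigma> t" using e by simp
  have "\<sigma> (inv\<^bsub>S\<^esub> s) * b = \<sigma> (inv\<^bsub>S\<^esub> s) * (\<sigma> s * b * \<sigma> (inv\<^bsub>S\<^esub> t))" using e by simp
  also have "\<dots> = (\<sigma> (inv\<^bsub>S\<^esub> s) * \<sigma> s) * b * \<sigma> (inv\<^bsub>S\<^esub> t)" by (simp add: mult.assoc)
  finally show "\<sigma> (inv\<^bsub>S\<^esub> s) * b = b * \<sigma> (inv\<^bsub>S\<^esub> t)" using sinv_l[OF st(1)] by simp
qed

lemma act_prod:
  assumes "s \<in> carrier S" "t \<in> carrier S" "r \<in> carrier S"
    and "act (s, t) b = b" and "act (t, r) c = c"
  shows "act (s, r) (b * c) = b * c"
proof -
  have "act (s, r) (b * c) = (\<sigma> s * b) * c * \<sigma> (inv\<^bsub>S\<^esub> r)" by (simp add: SS_act_def mult.assoc)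
  also have "\<dots> = b * (\<sigma> t * c * \<sigma> (inv\<^bsub>S\<^esub> r))"
    using act_fix_comm(1)[OF assms(1,2,4)] by (simp add: mult.assoc)
  also have "\<dots> = b * c" using assms(5) by (simp add: SS_act_def)
  finally show ?thesis .
qed

lemma act_swap_inv:
  assumes st: "s \<in> carrier S" "t \<in> carrier S" and b: "act (s, t) b = b"
    and bb: "b * b' = 1" "b' * b = 1"
  shows "act (t, s) b' = b'"
proof -
  let ?X = "\<sigma> t * b' * \<sigma> (inv\<^bsub>S\<^esub> s)"
  have "?X * b = \<sigma> t * b' * (\<sigma> (inv\<^bsub>S\<^esub> s) * b)" by (simp add: mult.assoc)
  also have "\<dots> = \<sigma> t * (b' * b) * \<sigma> (inv\<^bsub>S\<^esub> t)"
    using act_fix_comm(2)[OF st b] by (simp add: mult.assoc)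
  also have "\<dots> = 1" using bb sinv_r[OF st(2)] by simp
  finally have "?X * b = 1" .
  then have "?X = ?X * (b * b')" using bb by simp
  also have "\<dots> = b'" using \<open>?X * b = 1\<close> by (simp add: mult.assoc[symmetric])
  finally show ?thesis by (simp add: SS_act_def)
qed

definition hom_on :: "'g set \<Rightarrow> ('g \<Rightarrow> 'g) \<Rightarrow> bool" where
  "hom_on P \<phi> \<longleftrightarrow> \<phi> ` P \<subseteq> carrier S \<and> (\<forall>x\<in>P. \<forall>y\<in>P. \<phi> (x \<otimes>\<^bsub>S\<^esub> y) = \<phi> x \<otimes>\<^bsub>S\<^esub> \<phi> y)"

lemma hom_one:
  assumes P: "subgroup P S" and h: "hom_on P \<phi>"
  shows "\<phi> \<one>\<^bsub>S\<^esub> = \<one>\<^bsub>S\<^esub>"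
proof -
  have 1: "\<one>\<^bsub>S\<^esub> \<in> P" using subgroup.one_closed[OF P] .
  have c: "\<phi> \<one>\<^bsub>S\<^esub> \<in> carrier S" using h 1 unfolding hom_on_def by blast
  have "\<phi> (\<one>\<^bsub>S\<^esub> \<otimes>\<^bsub>S\<^esub> \<one>\<^bsub>S\<^esub>) = \<phi> \<one>\<^bsub>S\<^esub> \<otimes>\<^bsub>S\<^esub> \<phi> \<one>\<^bsub>S\<^esub>"
    using h 1 unfolding hom_on_def by blast
  then have "\<phi> \<one>\<^bsub>S\<^esub> \<otimes>\<^bsub>S\<^esub> \<phi> \<one>\<^bsub>S\<^esub> = \<phi> \<one>\<^bsub>S\<^esub>"
    by (simp only: G.l_one[OF G.one_closed])
  then show ?thesis using G.l_cancel_one[OF c c] by blast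
qed

lemma hom_inv:
  assumes P: "subgroup P S" and h: "hom_on P \<phi>" and x: "x \<in> P"
  shows "\<phi> (inv\<^bsub>S\<^esub> x) = inv\<^bsub>S\<^esub> (\<phi> x)"
proof -
  have ix: "inv\<^bsub>S\<^esub> x \<in> P" using subgroup.m_inv_closed[OF P x] .
  have xc: "x \<in> carrier S" using subgroup.mem_carrier[OF P x] .
  have "\<phi> (inv\<^bsub>S\<^esub> x) \<otimes>\<^bsub>S\<^esub> \<phi> x = \<phi> (inv\<^bsub>S\<^esub> x \<otimes>\<^bsub>S\<^esub> x)"
    using h ix x unfolding hom_on_def by metis
  also have "\<dots> = \<one>\<^bsub>S\<^esub>" by (simp only: G.l_inv[OF xc] hom_one[OF P h])
  finally have e: "\<phi> (inv\<^bsub>S\<^esub> x) \<otimes>\<^bsub>S\<^esub> \<phi> x = \<one>\<^bsub>S\<^esub>" .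
  have c1: "\<phi> x \<in> carrier S" and c2: "\<phi> (inv\<^bsub>S\<^esub> x) \<in> carrier S"
    using h x ix unfolding hom_on_def by blast+
  show ?thesis using G.inv_equality[OF e c1 c2] by (rule sym)
qed

lemma image_subgroup:
  assumes P: "subgroup P S" and h: "hom_on P \<phi>"
  shows "subgroup (\<phi> ` P) S"
proof (rule G.subgroupI)
  show "\<phi> ` P \<subseteq> carrier S" using h unfolding hom_on_def by blast
  show "\<phi> ` P \<noteq> {}" using subgroup.one_closed[OF P] by blast
  show "inv\<^bsub>S\<^esub> a \<in> \<phi> ` P" if a: "a \<in> \<phi> ` P" for a
  proof -
    obtain x where x: "x \<in> P" "a = \<phi> x" using a by blast
    then have "inv\<^bsub>S\<^esub> a = \<phi> (inv\<^bsub>S\<^esub> x)" using hom_inv[OF P h x(1)] by simp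
    then show ?thesis using subgroup.m_inv_closed[OF P x(1)] by blast
  qed
  show "a \<otimes>\<^bsub>S\<^esub> b \<in> \<phi> ` P" if ab: "a \<in> \<phi> ` P" "b \<in> \<phi> ` P" for a b
  proof -
    obtain x where x: "x \<in> P" "a = \<phi> x" using ab(1) by blast
    obtain y where y: "y \<in> P" "b = \<phi> y" using ab(2) by blast
    have "a \<otimes>\<^bsub>S\<^esub> b = \<phi> (x \<otimes>\<^bsub>S\<^esub> y)" using h x y unfolding hom_on_def by metis
    then show ?thesis using subgroup.m_closed[OF P x(1) y(1)] by blast
  qed
qed

lemma Delta_sub:
  assumes P: "subgroup P S" and h: "hom_on P \<phi>"
  shows "subgroup (Delta \<phi> P) (S \<times>\<times> S)"
proof -
  interpret G2: group "S \<times>\<times> S" by (rule grp2)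
  have Pc: "P \<subseteq> carrier S" using subgroup.subset[OF P] .
  have pc: "\<phi> ` P \<subseteq> carrier S" using h by (simp add: hom_on_def)
  show ?thesis
  proof (rule G2.subgroupI)
    show "Delta \<phi> P \<subseteq> carrier (S \<times>\<times> S)" using Pc pc by (auto simp: Delta_def)
    show "Delta \<phi> P \<noteq> {}" using subgroup.one_closed[OF P] by (auto simp: Delta_def)
    show "inv\<^bsub>S \<times>\<times> S\<^esub> a \<in> Delta \<phi> P" if a: "a \<in> Delta \<phi> P" for a
    proof -
      obtain x where x: "x \<in> P" "a = (\<phi> x, x)" using a unfolding Delta_def by blast
      have "inv\<^bsub>S \<times>\<times> S\<^esub> a = (inv\<^bsub>S\<^esub> (\<phi> x), inv\<^bsub>S\<^esub> x)"
      proof -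
        have "\<phi> x \<in> carrier S" "x \<in> carrier S" using x Pc pc by auto
        then have "inv\<^bsub>S \<times>\<times> S\<^esub> (\<phi> x, x) = (inv\<^bsub>S\<^esub> (\<phi> x), inv\<^bsub>S\<^esub> x)"
          by (rule inv_DirProd[OF grp grp])
        then show ?thesis using x(2) by simp
      qed
      also have "\<dots> = (\<phi> (inv\<^bsub>S\<^esub> x), inv\<^bsub>S\<^esub> x)" using hom_inv[OF P h x(1)] by simp
      finally have e: "inv\<^bsub>S \<times>\<times> S\<^esub> a = (\<phi> (inv\<^bsub>S\<^esub> x), inv\<^bsub>S\<^esub> x)" .
      have "inv\<^bsub>S\<^esub> x \<in> P" using subgroup.m_inv_closed[OF P x(1)] .
      then show ?thesis unfolding e Delta_def by blast
    qed
    show "a \<otimes>\<^bsub>S \<times>\<times> S\<^esub> b \<in> Delta \<phi> P" if ab: "a \<in> Delta \<phi> P" "b \<in> Delta \<phi> P" for a b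
    proof -
      obtain x where x: "x \<in> P" "a = (\<phi> x, x)" using ab(1) unfolding Delta_def by blast
      obtain y where y: "y \<in> P" "b = (\<phi> y, y)" using ab(2) unfolding Delta_def by blast
      have "a \<otimes>\<^bsub>S \<times>\<times> S\<^esub> b = (\<phi> x \<otimes>\<^bsub>S\<^esub> \<phi> y, x \<otimes>\<^bsub>S\<^esub> y)" using x y by simp
      also have "\<dots> = (\<phi> (x \<otimes>\<^bsub>S\<^esub> y), x \<otimes>\<^bsub>S\<^esub> y)" using h x y by (simp add: hom_on_def)
      finally have e: "a \<otimes>\<^bsub>S \<times>\<times> S\<^esub> b = (\<phi> (x \<otimes>\<^bsub>S\<^esub> y), x \<otimes>\<^bsub>S\<^esub> y)" .
      have "x \<otimes>\<^bsub>S\<^esub> y \<in> P" using subgroup.m_closed[OF P x(1) y(1)] .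
      then show ?thesis unfolding e Delta_def by blast
    qed
  qed
qed

lemma Delta_card:
  assumes P: "subgroup P S"
  shows "\<exists>k. card (Delta \<phi> P) = p ^ k"
proof -
  obtain n where n: "card (carrier S) = p ^ n" using pgrp by blast
  have "Delta \<phi> P = (\<lambda>x. (\<phi> x, x)) ` P" by (auto simp: Delta_def)
  moreover have "inj_on (\<lambda>x. (\<phi> x, x)) P" by (auto simp: inj_on_def)
  ultimately have "card (Delta \<phi> P) = card P" by (simp add: card_image)
  moreover have "card P dvd p ^ n"
  proof -
    have "card (rcosets\<^bsub>S\<^esub> P) * card P = card (carrier S)"
      using G.lagrange[OF P] by (simp add: Coset.order_def)
    then show ?thesis using n dvd_triv_right by metis
  qed
  then obtain i where "card P = p ^ i" using divides_primepow_nat[OF pr] by blast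
  ultimately show ?thesis by auto
qed

lemma nz_iff:
  assumes P: "subgroup P S" and h: "hom_on P \<phi>"
  shows "brauer_nonzero scale m S \<sigma> (Delta \<phi> P) \<longleftrightarrow> (\<exists>y\<in>Y. \<forall>x\<in>P. act (\<phi> x, x) y = y)"
proof
  assume "brauer_nonzero scale m S \<sigma> (Delta \<phi> P)"
  then obtain y where "y \<in> Y" "\<forall>u\<in>Delta \<phi> P. act u y = y"
    using fixed_of_nonzero[OF Delta_sub[OF P h]] by blast
  then show "\<exists>y\<in>Y. \<forall>x\<in>P. act (\<phi> x, x) y = y" by (auto simp: Delta_def)
next
  assume "\<exists>y\<in>Y. \<forall>x\<in>P. act (\<phi> x, x) y = y"
  then obtain y where "y \<in> Y" "\<forall>u\<in>Delta \<phi> P. act u y = y" by (auto simp: Delta_def)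
  moreover obtain k where "card (Delta \<phi> P) = p ^ k" using Delta_card[OF P] by blast
  ultimately show "brauer_nonzero scale m S \<sigma> (Delta \<phi> P)"
    using nonzero_of_fixed[OF Delta_sub[OF P h]] by blast
qed

end


theorem lemma2p7:
  fixes m :: "'o::idom set" and p :: nat
    and S :: "('g, 'b) monoid_scheme"
    and scale :: "'o \<Rightarrow> 'a::ring_1 \<Rightarrow> 'a" and \<sigma> :: "'g \<Rightarrow> 'a"
  assumes "coeff_ring m p"
    and "group S" and "finite (carrier S)" and "\<exists>n. card (carrier S) = p ^ n"
    and "bifree_algebra scale S \<sigma>"
    and "brauer_nonzero scale m S \<sigma> (Delta id (carrier S))"
    and "\<exists>Y. O_basis scale Y \<and> SS_invariant S \<sigma> Y \<and> (\<forall>y\<in>Y. is_unit_elem y)"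
  shows "divisible scale m S \<sigma>"
proof -
  note cr = assms(1)[unfolded coeff_ring_def local_ring_max_def maximal_ideal_def residue_char_def]
  have idl: "is_ideal m" and mU: "m \<noteq> UNIV" and pr: "prime p" and pm: "of_nat p \<in> m"
    using cr by auto
  have one_m: "1 \<notin> m"
  proof
    assume "1 \<in> m"
    then have "\<forall>r. r * 1 \<in> m" using idl unfolding is_ideal_def by blast
    then show False using mU by auto
  qed
  have ia: "interior_algebra scale S \<sigma>" using assms(5) by (simp add: bifree_algebra_def)
  note ia' = ia[unfolded interior_algebra_def]
  obtain Y where Y: "O_basis scale Y" "SS_invariant S \<sigma> Y" "\<forall>y\<in>Y. is_unit_elem y"
    using assms(7) by blast
  interpret G: group S by (rule assms(2))
  have "bsetup scale S \<sigma> m p Y"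
    unfolding bsetup_def bsetup_axioms_def
    using ia' Y(1,2) assms(2,3,4) pr pm idl one_m unfolding O_basis_def by blast
  then interpret B: bsetup scale S \<sigma> m p Y .
  have hid: "B.hom_on P id" if "subgroup P S" for P
    using subgroup.subset[OF that] by (auto simp: B.hom_on_def)
  obtain y0 where y0: "y0 \<in> Y" and y0fx: "\<forall>s\<in>carrier S. SS_act S \<sigma> (s, s) y0 = y0"
    using assms(6) B.nz_iff[OF G.subgroup_self hid[OF G.subgroup_self]] by auto
  have incl: "brauer_nonzero scale m S \<sigma> (Delta id P)" if P: "subgroup P S" for P
    using B.nz_iff[OF P hid[OF P]] y0 y0fx subgroup.subset[OF P] by auto
  have fh_hom: "B.hom_on P \<phi>" if "fusion_hom scale m S \<sigma> P Q \<phi>" for P Q \<phi>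
    using that subgroup.subset by (fastforce simp: fusion_hom_def B.hom_on_def)
  show ?thesis
    unfolding divisible_def
  proof (intro conjI allI impI)
    fix P Q assume "subgroup P S \<and> subgroup Q S \<and> P \<subseteq> Q"
    then show "fusion_hom scale m S \<sigma> P Q id"
      using incl by (auto simp: fusion_hom_def)
  next
    fix P Q R \<phi> \<psi>
    assume "fusion_hom scale m S \<sigma> P Q \<phi> \<and> fusion_hom scale m S \<sigma> Q R \<psi>"
    then have f1: "fusion_hom scale m S \<sigma> P Q \<phi>" and f2: "fusion_hom scale m S \<sigma> Q R \<psi>" by auto
    note f1' = f1[unfolded fusion_hom_def] and f2' = f2[unfolded fusion_hom_def]
    have P: "subgroup P S" and Q: "subgroup Q S" and R: "subgroup R S" using f1' f2' by auto
    have Qc: "Q \<subseteq> carrier S" using subgroup.subset[OF Q] .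
    have Rc: "R \<subseteq> carrier S" using subgroup.subset[OF R] .
    have h1: "B.hom_on P \<phi>" by (rule fh_hom[OF f1])
    have h2: "B.hom_on Q \<psi>" by (rule fh_hom[OF f2])
    have img: "(\<psi> \<circ> \<phi>) ` P \<subseteq> R" using f1' f2' by auto
    have hom: "\<forall>x\<in>P. \<forall>y\<in>P. (\<psi> \<circ> \<phi>) (x \<otimes>\<^bsub>S\<^esub> y) = (\<psi> \<circ> \<phi>) x \<otimes>\<^bsub>S\<^esub> (\<psi> \<circ> \<phi>) y"
    proof (intro ballI)
      fix x y assume "x \<in> P" "y \<in> P"
      moreover have "\<phi> x \<in> Q" "\<phi> y \<in> Q" using f1' \<open>x \<in> P\<close> \<open>y \<in> P\<close> by auto
      ultimately show "(\<psi> \<circ> \<phi>) (x \<otimes>\<^bsub>S\<^esub> y) = (\<psi> \<circ> \<phi>) x \<otimes>\<^bsub>S\<^esub> (\<psi> \<circ> \<phi>) y"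
        using f1' f2' by simp
    qed
    have h3: "B.hom_on P (\<psi> \<circ> \<phi>)" using img Rc hom by (auto simp: B.hom_on_def)
    have inj: "inj_on (\<psi> \<circ> \<phi>) P"
      using f1' f2' by (metis comp_inj_on inj_on_subset)
    obtain y1 where y1: "y1 \<in> Y" "\<forall>x\<in>P. SS_act S \<sigma> (\<phi> x, x) y1 = y1"
      using B.nz_iff[OF P h1] f1' by blast
    obtain y2 where y2: "y2 \<in> Y" "\<forall>z\<in>Q. SS_act S \<sigma> (\<psi> z, z) y2 = y2"
      using B.nz_iff[OF Q h2] f2' by blast
    obtain y1' where y1': "y1 * y1' = 1" "y1' * y1 = 1" using Y(3) y1(1) by (auto simp: is_unit_elem_def)
    obtain y2' where y2': "y2 * y2' = 1" "y2' * y2 = 1" using Y(3) y2(1) by (auto simp: is_unit_elem_def)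
    have aw: "(y2 * y1) * (y1' * y2') = 1"
    proof -
      have "(y2 * y1) * (y1' * y2') = y2 * (y1 * y1') * y2'" by (simp add: mult.assoc)
      then show ?thesis using y1' y2' by simp
    qed
    have wa: "(y1' * y2') * (y2 * y1) = 1"
    proof -
      have "(y1' * y2') * (y2 * y1) = y1' * (y2' * y2) * y1" by (simp add: mult.assoc)
      then show ?thesis using y1' y2' by simp
    qed
    have afx: "\<forall>u\<in>Delta (\<psi> \<circ> \<phi>) P. SS_act S \<sigma> u (y2 * y1) = y2 * y1"
    proof
      fix u assume "u \<in> Delta (\<psi> \<circ> \<phi>) P"
      then obtain x where x: "x \<in> P" "u = (\<psi> (\<phi> x), x)" by (auto simp: Delta_def)
      have phx: "\<phi> x \<in> Q" using f1' x(1) by auto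
      have c: "\<psi> (\<phi> x) \<in> carrier S" "\<phi> x \<in> carrier S" "x \<in> carrier S"
        using phx Qc Rc f2' x(1) subgroup.subset[OF P] by auto
      show "SS_act S \<sigma> u (y2 * y1) = y2 * y1"
        using B.act_prod[OF c] y2(2) phx y1(2) x by simp
    qed
    obtain k where k: "card (Delta (\<psi> \<circ> \<phi>) P) = p ^ k" using B.Delta_card[OF P] by blast
    obtain y where y: "y \<in> Y" "\<forall>u\<in>Delta (\<psi> \<circ> \<phi>) P. SS_act S \<sigma> u y = y"
      using B.fixed_of_unit[OF B.Delta_sub[OF P h3] k y0 y0fx aw wa afx] by blast
    have "brauer_nonzero scale m S \<sigma> (Delta (\<psi> \<circ> \<phi>) P)"
      using B.nz_iff[OF P h3] y by (auto simp: Delta_def)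
    then show "fusion_hom scale m S \<sigma> P R (\<psi> \<circ> \<phi>)"
      unfolding fusion_hom_def using P R img inj hom by blast
  next
    fix P Q \<phi> assume f1: "fusion_hom scale m S \<sigma> P Q \<phi>"
    note f1' = f1[unfolded fusion_hom_def]
    have P: "subgroup P S" using f1' by auto
    have Pc: "P \<subseteq> carrier S" using subgroup.subset[OF P] .
    have h1: "B.hom_on P \<phi>" by (rule fh_hom[OF f1])
    have PP: "subgroup (\<phi> ` P) S" by (rule B.image_subgroup[OF P h1])
    show "fusion_hom scale m S \<sigma> P (\<phi> ` P) \<phi>"
      using f1' PP by (auto simp: fusion_hom_def)
    let ?\<psi> = "inv_into P \<phi>"
    have inj: "inj_on \<phi> P" using f1' by auto
    have img: "?\<psi> ` (\<phi> ` P) \<subseteq> P" by (auto intro: inv_into_into)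
    have inj2: "inj_on ?\<psi> (\<phi> ` P)" by (rule inj_on_inv_into) simp
    have hom: "\<forall>a\<in>\<phi> ` P. \<forall>b\<in>\<phi> ` P. ?\<psi> (a \<otimes>\<^bsub>S\<^esub> b) = ?\<psi> a \<otimes>\<^bsub>S\<^esub> ?\<psi> b"
    proof (intro ballI)
      fix a b assume "a \<in> \<phi> ` P" "b \<in> \<phi> ` P"
      then obtain x y where x: "x \<in> P" "a = \<phi> x" and y: "y \<in> P" "b = \<phi> y" by blast
      have xy: "x \<otimes>\<^bsub>S\<^esub> y \<in> P" using subgroup.m_closed[OF P x(1) y(1)] .
      have "a \<otimes>\<^bsub>S\<^esub> b = \<phi> (x \<otimes>\<^bsub>S\<^esub> y)" using f1' x y by auto
      then have "?\<psi> (a \<otimes>\<^bsub>S\<^esub> b) = x \<otimes>\<^bsub>S\<^esub> y" using inv_into_f_f[OF inj xy] by simp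
      moreover have "?\<psi> a = x" "?\<psi> b = y" using inv_into_f_f[OF inj] x y by auto
      ultimately show "?\<psi> (a \<otimes>\<^bsub>S\<^esub> b) = ?\<psi> a \<otimes>\<^bsub>S\<^esub> ?\<psi> b" by simp
    qed
    have h2: "B.hom_on (\<phi> ` P) ?\<psi>" using img Pc hom by (auto simp: B.hom_on_def)
    obtain y1 where y1: "y1 \<in> Y" "\<forall>x\<in>P. SS_act S \<sigma> (\<phi> x, x) y1 = y1"
      using B.nz_iff[OF P h1] f1' by blast
    obtain y1' where y1': "y1 * y1' = 1" "y1' * y1 = 1" using Y(3) y1(1) by (auto simp: is_unit_elem_def)
    have afx: "\<forall>u\<in>Delta ?\<psi> (\<phi> ` P). SS_act S \<sigma> u y1' = y1'"
    proof
      fix u assume "u \<in> Delta ?\<psi> (\<phi> ` P)"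
      then obtain x where x: "x \<in> P" "u = (?\<psi> (\<phi> x), \<phi> x)" by (auto simp: Delta_def)
      have u: "u = (x, \<phi> x)" using x inv_into_f_f[OF inj x(1)] by simp
      have c: "\<phi> x \<in> carrier S" "x \<in> carrier S" using h1 x(1) Pc by (auto simp: B.hom_on_def)
      show "SS_act S \<sigma> u y1' = y1'"
        using B.act_swap_inv[OF c _ y1'] y1(2) x(1) u by simp
    qed
    obtain k where k: "card (Delta ?\<psi> (\<phi> ` P)) = p ^ k" using B.Delta_card[OF PP] by blast
    obtain y where y: "y \<in> Y" "\<forall>u\<in>Delta ?\<psi> (\<phi> ` P). SS_act S \<sigma> u y = y"
      using B.fixed_of_unit[OF B.Delta_sub[OF PP h2] k y0 y0fx y1'(2) y1'(1) afx] by blast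
    have "brauer_nonzero scale m S \<sigma> (Delta ?\<psi> (\<phi> ` P))"
      using B.nz_iff[OF PP h2] y by (auto simp: Delta_def)
    then show "fusion_hom scale m S \<sigma> (\<phi> ` P) P ?\<psi>"
      unfolding fusion_hom_def using P PP img inj2 hom by blast
  qed
qed

end
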